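(* Let $l\ge 2$ be an integer, $m=l^3-(l-2)^3$, and let $S_l$ be the set defined below. Then $S_l$ tiles $\mathbb{Z}^3$ by $(3m+6)\mathbb{Z}^3$, and whenever $S_l$ tiles $\mathbb{Z}^3$ by some $W$, $W$ is a translate of $(3m+6)\mathbb{Z}^3$.
   Context: Write $C_r=\{0,1,\dots,r-1\}^3$. Define $f:\{0,\dots,m+1\}^3\to\{1,\dots,m\}$ by: $f(x,y,z)=y$ if $0\le x\le m$, $1\le y\le m$, $z=0$; $f=x$ if $1\le x\le m$, $0\le y\le m$, $z=m+1$; $f=y$ if $x=0$, $1\le y\le m$, $1\le z\le m$; $f=x$ if $1\le x\le m$, $y=0$, $1\le z\le m$; $f=z$ if $1\le x\le m+1$, $1\le y\le m+1$, $1\le z\le m$; and $f=1$ at all remaining points. Let $Q_i=\{p\in\{0,\dots,m+1\}^3 : f(p)=i\}$. Set $Q_i'=3Q_i\oplus C_3$ for $2\le i\le m$, and $Q_1'=\big((3Q_1\oplus C_3)\cup\{(-1,1,1),(1,-1,1),(1,1,-1)\}\big)\setminus\{(3m+5,1,1),(1,3m+5,1),(1,1,3m+5)\}$ (here $cA=\{ca: a\in A\}$ and $A\oplus B=\{a+b: a\in A, b\in B\}$). Let $x_1,\dots,x_m$ be an enumeration of $C_l\setminus(C_{l-2}+(1,1,1))$ and $S_l=\bigcup_{i=1}^m\big(Q_i'+(3m+6)x_i\big)$. A set $P$ tiles $E$ by $W$ if $W\oplus P$ is non-overlapping (each sum arises from a unique pair) and $W\oplus P=E$. *)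

theory Defs
  imports Main
begin

type_synonym pt = "int \<times> int \<times> int"

definition padd :: "pt \<Rightarrow> pt \<Rightarrow> pt" where
  "padd p q = (case p of (a,b,c) \<Rightarrow> case q of (d,e,f) \<Rightarrow> (a+d, b+e, c+f))"

definition psmul :: "int \<Rightarrow> pt \<Rightarrow> pt" where
  "psmul k p = (case p of (a,b,c) \<Rightarrow> (k*a, k*b, k*c))"

definition msum :: "pt set \<Rightarrow> pt set \<Rightarrow> pt set" where
  "msum A B = {padd a b | a b. a \<in> A \<and> b \<in> B}"

definition dil :: "int \<Rightarrow> pt set \<Rightarrow> pt set" where
  "dil k A = psmul k ` A"

definition transl :: "pt set \<Rightarrow> pt \<Rightarrow> pt set" where
  "transl A t = (\<lambda>a. padd a t) ` A"

definition cube :: "int \<Rightarrow> pt set" where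
  "cube r = {(a,b,c). 0 \<le> a \<and> a < r \<and> 0 \<le> b \<and> b < r \<and> 0 \<le> c \<and> c < r}"

definition box :: "int \<Rightarrow> pt set" where
  "box m = {(x,y,z). 0 \<le> x \<and> x \<le> m+1 \<and> 0 \<le> y \<and> y \<le> m+1 \<and> 0 \<le> z \<and> z \<le> m+1}"

text \<open>The colouring f : {0..m+1}^3 -> {1..m} (the listed regions are pairwise disjoint).\<close>
definition fcol :: "int \<Rightarrow> pt \<Rightarrow> int" where
  "fcol m p = (case p of (x,y,z) \<Rightarrow>
     if 0 \<le> x \<and> x \<le> m \<and> 1 \<le> y \<and> y \<le> m \<and> z = 0 then y
     else if 1 \<le> x \<and> x \<le> m \<and> 0 \<le> y \<and> y \<le> m \<and> z = m+1 then x
     else if x = 0 \<and> 1 \<le> y \<and> y \<le> m \<and> 1 \<le> z \<and> z \<le> m then y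
     else if 1 \<le> x \<and> x \<le> m \<and> y = 0 \<and> 1 \<le> z \<and> z \<le> m then x
     else if 1 \<le> x \<and> x \<le> m+1 \<and> 1 \<le> y \<and> y \<le> m+1 \<and> 1 \<le> z \<and> z \<le> m then z
     else 1)"

definition Qset :: "int \<Rightarrow> int \<Rightarrow> pt set" where
  "Qset m i = {p \<in> box m. fcol m p = i}"

definition Qprime :: "int \<Rightarrow> int \<Rightarrow> pt set" where
  "Qprime m i = (if i = 1 then
      (msum (dil 3 (Qset m 1)) (cube 3) \<union> {(-1,1,1), (1,-1,1), (1,1,-1)})
        - {(3*m+5,1,1), (1,3*m+5,1), (1,1,3*m+5)}
    else msum (dil 3 (Qset m i)) (cube 3))"

definition Sset :: "int \<Rightarrow> (int \<Rightarrow> pt) \<Rightarrow> pt set" where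
  "Sset m x = (\<Union>i\<in>{1..m}. transl (Qprime m i) (psmul (3*m+6) (x i)))"

definition tiles :: "pt set \<Rightarrow> pt set \<Rightarrow> pt set \<Rightarrow> bool" where
  "tiles P E W \<longleftrightarrow>
     (\<forall>w1\<in>W. \<forall>w2\<in>W. \<forall>p1\<in>P. \<forall>p2\<in>P. padd w1 p1 = padd w2 p2 \<longrightarrow> w1 = w2 \<and> p1 = p2)
     \<and> msum W P = E"

end

theory Submission
  imports Defs
begin


lemma padd_simp[simp]: "padd (a,b,c) (d,e,f) = (a+d,b+e,c+f)" by (simp add: padd_def)
lemma psmul_simp[simp]: "psmul k (a,b,c) = (k*a,k*b,k*c)" by (simp add: psmul_def)

lemma mem_transl: "(p1,p2,p3) \<in> transl A (t1,t2,t3) \<longleftrightarrow> (p1-t1,p2-t2,p3-t3) \<in> A"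
  unfolding transl_def image_iff
  by (auto intro!: bexI[where x="(p1-t1,p2-t2,p3-t3)"])

lemma mem_blow: "(q1,q2,q3) \<in> msum (dil 3 A) (cube 3) \<longleftrightarrow> (q1 div 3, q2 div 3, q3 div 3) \<in> A"
proof
  assume "(q1,q2,q3) \<in> msum (dil 3 A) (cube 3)"
  then obtain a1 a2 a3 b1 b2 b3 where a: "(a1,a2,a3) \<in> A" and b: "0 \<le> b1" "b1 < 3" "0 \<le> b2" "b2 < 3" "0 \<le> b3" "b3 < 3"
    and q: "q1 = 3*a1+b1" "q2 = 3*a2+b2" "q3 = 3*a3+b3"
    unfolding msum_def dil_def cube_def by auto
  have "q1 div 3 = a1" "q2 div 3 = a2" "q3 div 3 = a3" using b q by auto
  with a show "(q1 div 3, q2 div 3, q3 div 3) \<in> A" by simp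
next
  assume a: "(q1 div 3, q2 div 3, q3 div 3) \<in> A"
  have "(q1,q2,q3) = padd (psmul 3 (q1 div 3, q2 div 3, q3 div 3)) (q1 mod 3, q2 mod 3, q3 mod 3)" by simp
  moreover have "(q1 mod 3, q2 mod 3, q3 mod 3) \<in> cube 3" by (simp add: cube_def)
  ultimately show "(q1,q2,q3) \<in> msum (dil 3 A) (cube 3)" using a unfolding msum_def dil_def by blast
qed

definition Nt :: "int \<Rightarrow> pt set" where "Nt m = {(3*m+5,1,1), (1,3*m+5,1), (1,1,3*m+5)}"
definition Bp :: "pt set" where "Bp = {(-1,1,1), (1,-1,1), (1,1,-1)}"

definition inQ :: "int \<Rightarrow> int \<Rightarrow> int \<Rightarrow> int \<Rightarrow> int \<Rightarrow> bool" where
  "inQ m i q1 q2 q3 \<longleftrightarrow> (q1 div 3, q2 div 3, q3 div 3) \<in> box m \<and> fcol m (q1 div 3, q2 div 3, q3 div 3) = i"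

lemma mem_Qprime: "(q1,q2,q3) \<in> Qprime m i \<longleftrightarrow>
  (if i = 1 then (inQ m 1 q1 q2 q3 \<or> (q1,q2,q3) \<in> Bp) \<and> (q1,q2,q3) \<notin> Nt m else inQ m i q1 q2 q3)"
  unfolding Qprime_def Nt_def Bp_def inQ_def mem_blow[symmetric] Qset_def
  by (auto simp: mem_blow)

lemma mem_S: "(s1,s2,s3) \<in> Sset m x \<longleftrightarrow> (\<exists>i\<in>{1..m}. (s1 - (3*m+6)*fst (x i), s2 - (3*m+6)*fst (snd (x i)), s3 - (3*m+6)*snd (snd (x i))) \<in> Qprime m i)"
  unfolding Sset_def UN_iff
  apply (rule bex_cong[OF refl])
  subgoal for i by (cases "x i") (simp add: mem_transl)
  done

lemma fcol_range: "m \<ge> 1 \<Longrightarrow> (a1,a2,a3) \<in> box m \<Longrightarrow> 1 \<le> fcol m (a1,a2,a3) \<and> fcol m (a1,a2,a3) \<le> m"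
  by (auto simp: fcol_def box_def)

lemma fcol_corners: "m \<ge> 2 \<Longrightarrow> fcol m (m+1,0,0) = 1 \<and> fcol m (0,m+1,0) = 1 \<and> fcol m (0,0,m+1) = 1 \<and> fcol m (0,0,0) = 1"
  by (auto simp: fcol_def)

definition pm :: "int \<Rightarrow> pt \<Rightarrow> pt" where "pm N p = (case p of (a,b,c) \<Rightarrow> (a mod N, b mod N, c mod N))"
lemma pm_simp[simp]: "pm N (a,b,c) = (a mod N, b mod N, c mod N)" by (simp add: pm_def)

definition canon :: "int \<Rightarrow> (int \<Rightarrow> pt) \<Rightarrow> pt \<Rightarrow> pt" where
 "canon m x r = (if r = (3*m+5,1,1) then padd (-1,1,1) (psmul (3*m+6) (x 1))
   else if r = (1,3*m+5,1) then padd (1,-1,1) (psmul (3*m+6) (x 1))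
   else if r = (1,1,3*m+5) then padd (1,1,-1) (psmul (3*m+6) (x 1))
   else padd r (psmul (3*m+6) (x (fcol m (fst r div 3, fst (snd r) div 3, snd (snd r) div 3)))))"

lemma canon_S:
  assumes m: "m \<ge> 2" and s: "(s1,s2,s3) \<in> Sset m x"
  shows "(s1,s2,s3) = canon m x (pm (3*m+6) (s1,s2,s3))"
proof -
  obtain i where i: "i \<in> {1..m}" and q: "(s1 - (3*m+6)*fst (x i), s2 - (3*m+6)*fst (snd (x i)), s3 - (3*m+6)*snd (snd (x i))) \<in> Qprime m i"
    using s mem_S by blast
  obtain y1 y2 y3 where y: "x i = (y1,y2,y3)" by (cases "x i") auto
  define q1 where "q1 = s1 - (3*m+6)*y1"
  define q2 where "q2 = s2 - (3*m+6)*y2"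
  define q3 where "q3 = s3 - (3*m+6)*y3"
  have sq: "s1 = q1 + (3*m+6)*y1" "s2 = q2 + (3*m+6)*y2" "s3 = q3 + (3*m+6)*y3" by (simp_all add: q1_def q2_def q3_def)
  have qQ: "(q1,q2,q3) \<in> Qprime m i" using q y by (simp add: q1_def q2_def q3_def)
  have pmq: "pm (3*m+6) (s1,s2,s3) = (q1 mod (3*m+6), q2 mod (3*m+6), q3 mod (3*m+6))"
    using sq by simp
  show ?thesis
  proof (cases "(q1,q2,q3) \<in> Bp")
    case True
    have "\<not> inQ m i q1 q2 q3" using True by (auto simp: Bp_def inQ_def box_def)
    then have i1: "i = 1" using qQ unfolding mem_Qprime by (auto split: if_splits)
    have mm1: "(-1::int) mod (3*m+6) = 3*m+5" using m by (simp add: zmod_minus1)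
    have m1: "(1::int) mod (3*m+6) = 1" using m by simp
    from True m show ?thesis unfolding pmq canon_def using sq y i1
      using mm1 m1 by (auto simp: Bp_def)
  next
    case False
    then have iq: "inQ m i q1 q2 q3" and nn: "i = 1 \<Longrightarrow> (q1,q2,q3) \<notin> Nt m" using qQ unfolding mem_Qprime by (auto split: if_splits)
    have rng: "0 \<le> q1" "q1 < 3*m+6" "0 \<le> q2" "q2 < 3*m+6" "0 \<le> q3" "q3 < 3*m+6"
      using iq unfolding inQ_def box_def by auto
    have pmq2: "pm (3*m+6) (s1,s2,s3) = (q1,q2,q3)" unfolding pmq using rng by simp
    have "(q1,q2,q3) \<notin> Nt m"
    proof
      assume a: "(q1,q2,q3) \<in> Nt m"
      then have "fcol m (q1 div 3, q2 div 3, q3 div 3) = 1" using fcol_corners[OF m] by (auto simp: Nt_def)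
      then have "i = 1" using iq by (simp add: inQ_def)
      then show False using nn a by simp
    qed
    then show ?thesis unfolding pmq2 canon_def using sq y iq by (auto simp: Nt_def inQ_def)
  qed
qed

lemma modsh1: "((N::int)*y + a) mod N = a mod N" by (metis add.commute mod_mult_self2)
lemma modsh2: "((N::int)*y - a) mod N = (- a) mod N" by (metis modsh1 uminus_add_conv_diff add.commute)
lemma modsh3: "(a + (N::int)*y) mod N = a mod N" by (metis mod_mult_self2)

lemma S_canon:
  assumes m: "m \<ge> 2" and r: "0 \<le> r1" "r1 < 3*m+6" "0 \<le> r2" "r2 < 3*m+6" "0 \<le> r3" "r3 < 3*m+6"
  shows "canon m x (r1,r2,r3) \<in> Sset m x \<and> pm (3*m+6) (canon m x (r1,r2,r3)) = (r1,r2,r3)"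
proof -
  have mm1: "(-1::int) mod (3*m+6) = 3*m+5" using m by (simp add: zmod_minus1)
  have m1: "(1::int) mod (3*m+6) = 1" using m by simp
  obtain y1 y2 y3 where y: "x 1 = (y1,y2,y3)" by (cases "x 1") auto
  have one: "(1::int) \<in> {1..m}" using m by simp
  show ?thesis
  proof (cases "(r1,r2,r3) \<in> Nt m")
    case True
    have bQ: "b \<in> Bp \<Longrightarrow> b \<in> Qprime m 1" for b
      using m by (cases b) (auto simp: mem_Qprime Bp_def Nt_def)
    from True show ?thesis
    proof (simp add: Nt_def, elim disjE)
      assume a: "r1 = 3*m+5 \<and> r2 = 1 \<and> r3 = 1"
      have "(-1,1,1) \<in> Qprime m 1" by (rule bQ) (simp add: Bp_def)
      then show ?thesis using a y one mm1 m1 unfolding canon_def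
        by (auto simp: mem_S modsh1 modsh2 modsh3 intro!: bexI[where x=1])
    next
      assume a: "r1 = 1 \<and> r2 = 3*m+5 \<and> r3 = 1"
      have "(1,-1,1) \<in> Qprime m 1" by (rule bQ) (simp add: Bp_def)
      then show ?thesis using a y one mm1 m1 m unfolding canon_def
        by (auto simp: mem_S modsh1 modsh2 modsh3 intro!: bexI[where x=1])
    next
      assume a: "r1 = 1 \<and> r2 = 1 \<and> r3 = 3*m+5"
      have "(1,1,-1) \<in> Qprime m 1" by (rule bQ) (simp add: Bp_def)
      then show ?thesis using a y one mm1 m1 m unfolding canon_def
        by (auto simp: mem_S modsh1 modsh2 modsh3 intro!: bexI[where x=1])
    qed
  next
    case False
    define i where "i = fcol m (r1 div 3, r2 div 3, r3 div 3)"
    have bx: "(r1 div 3, r2 div 3, r3 div 3) \<in> box m" using r by (auto simp: box_def)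
    have i: "i \<in> {1..m}" using fcol_range[OF _ bx] m by (simp add: i_def)
    obtain z1 z2 z3 where z: "x i = (z1,z2,z3)" by (cases "x i") auto
    have c: "canon m x (r1,r2,r3) = (r1 + (3*m+6)*z1, r2 + (3*m+6)*z2, r3 + (3*m+6)*z3)"
      using False z unfolding canon_def i_def by (auto simp: Nt_def)
    have "(r1,r2,r3) \<in> Qprime m i" using False bx unfolding mem_Qprime by (simp add: inQ_def i_def)
    then have "canon m x (r1,r2,r3) \<in> Sset m x" unfolding c mem_S using i z by (auto intro!: bexI[where x=i])
    moreover have "pm (3*m+6) (canon m x (r1,r2,r3)) = (r1,r2,r3)" unfolding c using r by simp
    ultimately show ?thesis by simp
  qed
qed

lemma S_uniq:
  assumes m: "m \<ge> 2" and "s \<in> Sset m x" "s' \<in> Sset m x" "pm (3*m+6) s = pm (3*m+6) s'"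
  shows "s = s'"
  using canon_S[OF m, of "fst s" "fst (snd s)" "snd (snd s)" x] canon_S[OF m, of "fst s'" "fst (snd s')" "snd (snd s')" x] assms
  by auto

lemma S_exist:
  assumes m: "m \<ge> 2"
  shows "\<exists>s\<in>Sset m x. pm (3*m+6) s = pm (3*m+6) p"
proof -
  obtain p1 p2 p3 where p: "p = (p1,p2,p3)" by (cases p) auto
  have "canon m x (p1 mod (3*m+6), p2 mod (3*m+6), p3 mod (3*m+6)) \<in> Sset m x \<and>
        pm (3*m+6) (canon m x (p1 mod (3*m+6), p2 mod (3*m+6), p3 mod (3*m+6))) = (p1 mod (3*m+6), p2 mod (3*m+6), p3 mod (3*m+6))"
    by (rule S_canon) (use m in auto)
  then show ?thesis using p by auto
qed

lemma dv3: "(q + (if q mod 3 \<le> 1 then 1 else -1)) div 3 = (q::int) div 3"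
  by (cases "q mod 3 \<le> 1") (simp_all, presburger+)

lemma block_nb:
  fixes q1 q2 q3 :: int
  assumes m: "m \<ge> 2" and iq: "inQ m i q1 q2 q3" and nn: "i = 1 \<Longrightarrow> (q1,q2,q3) \<notin> Nt m"
  defines "d1 \<equiv> (if q1 mod 3 \<le> 1 then 1 else -1::int)"
      and "d2 \<equiv> (if q2 mod 3 \<le> 1 then 1 else -1::int)"
      and "d3 \<equiv> (if q3 mod 3 \<le> 1 then 1 else -1::int)"
  shows "(q1+d1,q2,q3) \<in> Qprime m i \<or> (q1,q2+d2,q3) \<in> Qprime m i"
    "(q1+d1,q2,q3) \<in> Qprime m i \<or> (q1,q2,q3+d3) \<in> Qprime m i"
    "(q1,q2+d2,q3) \<in> Qprime m i \<or> (q1,q2,q3+d3) \<in> Qprime m i"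
    "d1 = 1 \<or> d1 = -1" "d2 = 1 \<or> d2 = -1" "d3 = 1 \<or> d3 = -1"
proof -
  have i1: "inQ m i (q1+d1) q2 q3" using iq dv3[of q1] by (simp add: inQ_def d1_def)
  have i2: "inQ m i q1 (q2+d2) q3" using iq dv3[of q2] by (simp add: inQ_def d2_def)
  have i3: "inQ m i q1 q2 (q3+d3)" using iq dv3[of q3] by (simp add: inQ_def d3_def)
  have dd: "d1 = 1 \<or> d1 = -1" "d2 = 1 \<or> d2 = -1" "d3 = 1 \<or> d3 = -1" by (simp_all add: d1_def d2_def d3_def)
  have n12: "(q1+d1,q2,q3) \<notin> Nt m \<or> (q1,q2+d2,q3) \<notin> Nt m" using dd m by (auto simp: Nt_def)
  have n13: "(q1+d1,q2,q3) \<notin> Nt m \<or> (q1,q2,q3+d3) \<notin> Nt m" using dd m by (auto simp: Nt_def)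
  have n23: "(q1,q2+d2,q3) \<notin> Nt m \<or> (q1,q2,q3+d3) \<notin> Nt m" using dd m by (auto simp: Nt_def)
  show "(q1+d1,q2,q3) \<in> Qprime m i \<or> (q1,q2+d2,q3) \<in> Qprime m i"
    using i1 i2 n12 by (auto simp: mem_Qprime)
  show "(q1+d1,q2,q3) \<in> Qprime m i \<or> (q1,q2,q3+d3) \<in> Qprime m i"
    using i1 i3 n13 by (auto simp: mem_Qprime)
  show "(q1,q2+d2,q3) \<in> Qprime m i \<or> (q1,q2,q3+d3) \<in> Qprime m i"
    using i2 i3 n23 by (auto simp: mem_Qprime)
  show "d1 = 1 \<or> d1 = -1" "d2 = 1 \<or> d2 = -1" "d3 = 1 \<or> d3 = -1" by (fact dd)+
qed

lemma key_x:
  assumes m: "m \<ge> 2" and s: "(s1,s2,s3) \<in> Sset m x"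
    and "(s1-1,s2,s3) \<notin> Sset m x"
    and "(s1,s2+1,s3) \<notin> Sset m x"
    and "(s1,s2-1,s3) \<notin> Sset m x"
    and "(s1,s2,s3+1) \<notin> Sset m x"
    and "(s1,s2,s3-1) \<notin> Sset m x"
    and y: "x 1 = (y1,y2,y3)"
  shows "(s1,s2,s3) = (-1 + (3*m+6)*y1, 1 + (3*m+6)*y2, 1 + (3*m+6)*y3)"
proof -
  obtain i where i: "i \<in> {1..m}" and q: "(s1 - (3*m+6)*fst (x i), s2 - (3*m+6)*fst (snd (x i)), s3 - (3*m+6)*snd (snd (x i))) \<in> Qprime m i"
    using s mem_S by blast
  obtain z1 z2 z3 where z: "x i = (z1,z2,z3)" by (cases "x i") auto
  define q1 where "q1 = s1 - (3*m+6)*z1"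
  define q2 where "q2 = s2 - (3*m+6)*z2"
  define q3 where "q3 = s3 - (3*m+6)*z3"
  have sq: "s1 = q1 + (3*m+6)*z1" "s2 = q2 + (3*m+6)*z2" "s3 = q3 + (3*m+6)*z3" by (simp_all add: q1_def q2_def q3_def)
  have qQ: "(q1,q2,q3) \<in> Qprime m i" using q z by (simp add: q1_def q2_def q3_def)
  have nb: "(a + (3*m+6)*z1, b + (3*m+6)*z2, c + (3*m+6)*z3) \<in> Sset m x" if "(a,b,c) \<in> Qprime m i" for a b c
    using that i z by (auto simp: mem_S intro!: bexI[where x=i])
  show ?thesis
  proof (cases "(q1,q2,q3) \<in> Bp")
    case True
    have "\<not> inQ m i q1 q2 q3" using True by (auto simp: Bp_def inQ_def box_def)
    then have i1: "i = 1" using qQ unfolding mem_Qprime by (auto split: if_splits)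
    then have zy: "z1 = y1" "z2 = y2" "z3 = y3" using z y by auto
    have Q1: "(0,1,1) \<in> Qprime m 1" "(1,0,1) \<in> Qprime m 1" "(1,1,0) \<in> Qprime m 1"
      using m fcol_corners[OF m] by (auto simp: mem_Qprime inQ_def box_def Nt_def)
    from True have "(q1 = -1 \<and> q2 = 1 \<and> q3 = 1) \<or> (q1 = 1 \<and> q2 = -1 \<and> q3 = 1) \<or> (q1 = 1 \<and> q2 = 1 \<and> q3 = -1)" by (simp add: Bp_def)
    then show ?thesis
    proof (elim disjE)
      assume a: "q1 = -1 \<and> q2 = 1 \<and> q3 = 1"
      show ?thesis using a sq zy by simp
    next
      assume a: "q1 = 1 \<and> q2 = -1 \<and> q3 = 1"
      have "(s1,s2+1,s3) \<in> Sset m x" using nb[of 1 0 1] Q1(2) i1 a sq by (simp add: algebra_simps)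
      then show ?thesis using assms by simp
    next
      assume a: "q1 = 1 \<and> q2 = 1 \<and> q3 = -1"
      have "(s1,s2,s3+1) \<in> Sset m x" using nb[of 1 1 0] Q1(3) i1 a sq by (simp add: algebra_simps)
      then show ?thesis using assms by simp
    qed
  next
    case False
    then have iq: "inQ m i q1 q2 q3" and nn: "i = 1 \<Longrightarrow> (q1,q2,q3) \<notin> Nt m" using qQ unfolding mem_Qprime by (auto split: if_splits)
    note B = block_nb[OF m iq nn]
    from B(3) B(5) B(6) obtain a b c where abc: "(a,b,c) \<in> Qprime m i"
      and ab: "(a,b,c) \<in> {(q1,q2+1,q3),(q1,q2-1,q3),(q1,q2,q3+1),(q1,q2,q3-1)}" by auto
    have "(a + (3*m+6)*z1, b + (3*m+6)*z2, c + (3*m+6)*z3) \<in> Sset m x" using nb[OF abc] .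
    then have False using ab assms(3-7) sq by (auto simp: algebra_simps)
    then show ?thesis ..
  qed
qed

lemma key_y:
  assumes m: "m \<ge> 2" and s: "(s1,s2,s3) \<in> Sset m x"
    and "(s1,s2-1,s3) \<notin> Sset m x"
    and "(s1+1,s2,s3) \<notin> Sset m x"
    and "(s1-1,s2,s3) \<notin> Sset m x"
    and "(s1,s2,s3+1) \<notin> Sset m x"
    and "(s1,s2,s3-1) \<notin> Sset m x"
    and y: "x 1 = (y1,y2,y3)"
  shows "(s1,s2,s3) = (1 + (3*m+6)*y1, -1 + (3*m+6)*y2, 1 + (3*m+6)*y3)"
proof -
  obtain i where i: "i \<in> {1..m}" and q: "(s1 - (3*m+6)*fst (x i), s2 - (3*m+6)*fst (snd (x i)), s3 - (3*m+6)*snd (snd (x i))) \<in> Qprime m i"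
    using s mem_S by blast
  obtain z1 z2 z3 where z: "x i = (z1,z2,z3)" by (cases "x i") auto
  define q1 where "q1 = s1 - (3*m+6)*z1"
  define q2 where "q2 = s2 - (3*m+6)*z2"
  define q3 where "q3 = s3 - (3*m+6)*z3"
  have sq: "s1 = q1 + (3*m+6)*z1" "s2 = q2 + (3*m+6)*z2" "s3 = q3 + (3*m+6)*z3" by (simp_all add: q1_def q2_def q3_def)
  have qQ: "(q1,q2,q3) \<in> Qprime m i" using q z by (simp add: q1_def q2_def q3_def)
  have nb: "(a + (3*m+6)*z1, b + (3*m+6)*z2, c + (3*m+6)*z3) \<in> Sset m x" if "(a,b,c) \<in> Qprime m i" for a b c
    using that i z by (auto simp: mem_S intro!: bexI[where x=i])
  show ?thesis
  proof (cases "(q1,q2,q3) \<in> Bp")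
    case True
    have "\<not> inQ m i q1 q2 q3" using True by (auto simp: Bp_def inQ_def box_def)
    then have i1: "i = 1" using qQ unfolding mem_Qprime by (auto split: if_splits)
    then have zy: "z1 = y1" "z2 = y2" "z3 = y3" using z y by auto
    have Q1: "(0,1,1) \<in> Qprime m 1" "(1,0,1) \<in> Qprime m 1" "(1,1,0) \<in> Qprime m 1"
      using m fcol_corners[OF m] by (auto simp: mem_Qprime inQ_def box_def Nt_def)
    from True have "(q1 = -1 \<and> q2 = 1 \<and> q3 = 1) \<or> (q1 = 1 \<and> q2 = -1 \<and> q3 = 1) \<or> (q1 = 1 \<and> q2 = 1 \<and> q3 = -1)" by (simp add: Bp_def)
    then show ?thesis
    proof (elim disjE)
      assume a: "q1 = -1 \<and> q2 = 1 \<and> q3 = 1"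
      have "(s1+1,s2,s3) \<in> Sset m x" using nb[of 0 1 1] Q1(1) i1 a sq by (simp add: algebra_simps)
      then show ?thesis using assms by simp
    next
      assume a: "q1 = 1 \<and> q2 = -1 \<and> q3 = 1"
      show ?thesis using a sq zy by simp
    next
      assume a: "q1 = 1 \<and> q2 = 1 \<and> q3 = -1"
      have "(s1,s2,s3+1) \<in> Sset m x" using nb[of 1 1 0] Q1(3) i1 a sq by (simp add: algebra_simps)
      then show ?thesis using assms by simp
    qed
  next
    case False
    then have iq: "inQ m i q1 q2 q3" and nn: "i = 1 \<Longrightarrow> (q1,q2,q3) \<notin> Nt m" using qQ unfolding mem_Qprime by (auto split: if_splits)
    note B = block_nb[OF m iq nn]
    from B(2) B(4) B(6) obtain a b c where abc: "(a,b,c) \<in> Qprime m i"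
      and ab: "(a,b,c) \<in> {(q1+1,q2,q3),(q1-1,q2,q3),(q1,q2,q3+1),(q1,q2,q3-1)}" by auto
    have "(a + (3*m+6)*z1, b + (3*m+6)*z2, c + (3*m+6)*z3) \<in> Sset m x" using nb[OF abc] .
    then have False using ab assms(3-7) sq by (auto simp: algebra_simps)
    then show ?thesis ..
  qed
qed

lemma key_z:
  assumes m: "m \<ge> 2" and s: "(s1,s2,s3) \<in> Sset m x"
    and "(s1,s2,s3-1) \<notin> Sset m x"
    and "(s1+1,s2,s3) \<notin> Sset m x"
    and "(s1-1,s2,s3) \<notin> Sset m x"
    and "(s1,s2+1,s3) \<notin> Sset m x"
    and "(s1,s2-1,s3) \<notin> Sset m x"
    and y: "x 1 = (y1,y2,y3)"
  shows "(s1,s2,s3) = (1 + (3*m+6)*y1, 1 + (3*m+6)*y2, -1 + (3*m+6)*y3)"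
proof -
  obtain i where i: "i \<in> {1..m}" and q: "(s1 - (3*m+6)*fst (x i), s2 - (3*m+6)*fst (snd (x i)), s3 - (3*m+6)*snd (snd (x i))) \<in> Qprime m i"
    using s mem_S by blast
  obtain z1 z2 z3 where z: "x i = (z1,z2,z3)" by (cases "x i") auto
  define q1 where "q1 = s1 - (3*m+6)*z1"
  define q2 where "q2 = s2 - (3*m+6)*z2"
  define q3 where "q3 = s3 - (3*m+6)*z3"
  have sq: "s1 = q1 + (3*m+6)*z1" "s2 = q2 + (3*m+6)*z2" "s3 = q3 + (3*m+6)*z3" by (simp_all add: q1_def q2_def q3_def)
  have qQ: "(q1,q2,q3) \<in> Qprime m i" using q z by (simp add: q1_def q2_def q3_def)
  have nb: "(a + (3*m+6)*z1, b + (3*m+6)*z2, c + (3*m+6)*z3) \<in> Sset m x" if "(a,b,c) \<in> Qprime m i" for a b c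
    using that i z by (auto simp: mem_S intro!: bexI[where x=i])
  show ?thesis
  proof (cases "(q1,q2,q3) \<in> Bp")
    case True
    have "\<not> inQ m i q1 q2 q3" using True by (auto simp: Bp_def inQ_def box_def)
    then have i1: "i = 1" using qQ unfolding mem_Qprime by (auto split: if_splits)
    then have zy: "z1 = y1" "z2 = y2" "z3 = y3" using z y by auto
    have Q1: "(0,1,1) \<in> Qprime m 1" "(1,0,1) \<in> Qprime m 1" "(1,1,0) \<in> Qprime m 1"
      using m fcol_corners[OF m] by (auto simp: mem_Qprime inQ_def box_def Nt_def)
    from True have "(q1 = -1 \<and> q2 = 1 \<and> q3 = 1) \<or> (q1 = 1 \<and> q2 = -1 \<and> q3 = 1) \<or> (q1 = 1 \<and> q2 = 1 \<and> q3 = -1)" by (simp add: Bp_def)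
    then show ?thesis
    proof (elim disjE)
      assume a: "q1 = -1 \<and> q2 = 1 \<and> q3 = 1"
      have "(s1+1,s2,s3) \<in> Sset m x" using nb[of 0 1 1] Q1(1) i1 a sq by (simp add: algebra_simps)
      then show ?thesis using assms by simp
    next
      assume a: "q1 = 1 \<and> q2 = -1 \<and> q3 = 1"
      have "(s1,s2+1,s3) \<in> Sset m x" using nb[of 1 0 1] Q1(2) i1 a sq by (simp add: algebra_simps)
      then show ?thesis using assms by simp
    next
      assume a: "q1 = 1 \<and> q2 = 1 \<and> q3 = -1"
      show ?thesis using a sq zy by simp
    qed
  next
    case False
    then have iq: "inQ m i q1 q2 q3" and nn: "i = 1 \<Longrightarrow> (q1,q2,q3) \<notin> Nt m" using qQ unfolding mem_Qprime by (auto split: if_splits)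
    note B = block_nb[OF m iq nn]
    from B(1) B(4) B(5) obtain a b c where abc: "(a,b,c) \<in> Qprime m i"
      and ab: "(a,b,c) \<in> {(q1+1,q2,q3),(q1-1,q2,q3),(q1,q2+1,q3),(q1,q2-1,q3)}" by auto
    have "(a + (3*m+6)*z1, b + (3*m+6)*z2, c + (3*m+6)*z3) \<in> Sset m x" using nb[OF abc] .
    then have False using ab assms(3-7) sq by (auto simp: algebra_simps)
    then show ?thesis ..
  qed
qed

lemma inS1: "m \<ge> 2 \<Longrightarrow> (a,b,c) \<in> Qprime m 1 \<Longrightarrow> x 1 = (y1,y2,y3) \<Longrightarrow>
   (a + (3*m+6)*y1, b + (3*m+6)*y2, c + (3*m+6)*y3) \<in> Sset m x"
  by (auto simp: mem_S intro!: bexI[where x=1])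

lemma cornerQ:
  assumes m: "m \<ge> 2"
  shows "(3*m+4,1,1) \<in> Qprime m 1" "(3*m+5,0,1) \<in> Qprime m 1" "(3*m+5,2,1) \<in> Qprime m 1"
    "(3*m+5,1,0) \<in> Qprime m 1" "(3*m+5,1,2) \<in> Qprime m 1"
    "(1,3*m+4,1) \<in> Qprime m 1" "(0,3*m+5,1) \<in> Qprime m 1" "(2,3*m+5,1) \<in> Qprime m 1"
    "(1,3*m+5,0) \<in> Qprime m 1" "(1,3*m+5,2) \<in> Qprime m 1"
    "(1,1,3*m+4) \<in> Qprime m 1" "(0,1,3*m+5) \<in> Qprime m 1" "(2,1,3*m+5) \<in> Qprime m 1"
    "(1,0,3*m+5) \<in> Qprime m 1" "(1,2,3*m+5) \<in> Qprime m 1"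
    "(-1,1,1) \<in> Qprime m 1" "(1,-1,1) \<in> Qprime m 1" "(1,1,-1) \<in> Qprime m 1"
proof -
  have d: "(3*m+4) div 3 = m+1" "(3*m+5) div 3 = m+1" by presburger+
  show "(3*m+4,1,1) \<in> Qprime m 1" "(3*m+5,0,1) \<in> Qprime m 1" "(3*m+5,2,1) \<in> Qprime m 1"
    "(3*m+5,1,0) \<in> Qprime m 1" "(3*m+5,1,2) \<in> Qprime m 1"
    "(1,3*m+4,1) \<in> Qprime m 1" "(0,3*m+5,1) \<in> Qprime m 1" "(2,3*m+5,1) \<in> Qprime m 1"
    "(1,3*m+5,0) \<in> Qprime m 1" "(1,3*m+5,2) \<in> Qprime m 1"
    "(1,1,3*m+4) \<in> Qprime m 1" "(0,1,3*m+5) \<in> Qprime m 1" "(2,1,3*m+5) \<in> Qprime m 1"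
    "(1,0,3*m+5) \<in> Qprime m 1" "(1,2,3*m+5) \<in> Qprime m 1"
    using m fcol_corners[OF m] d by (auto simp: mem_Qprime inQ_def box_def Nt_def)
  show "(-1,1,1) \<in> Qprime m 1" "(1,-1,1) \<in> Qprime m 1" "(1,1,-1) \<in> Qprime m 1"
    using m by (auto simp: mem_Qprime Bp_def Nt_def)
qed

lemma tiles_NO: "tiles P E W \<Longrightarrow> w1 \<in> W \<Longrightarrow> w2 \<in> W \<Longrightarrow> p1 \<in> P \<Longrightarrow> p2 \<in> P \<Longrightarrow> padd w1 p1 = padd w2 p2 \<Longrightarrow> w1 = w2 \<and> p1 = p2"
  unfolding tiles_def by blast

lemma tiles_COV: "tiles P UNIV W \<Longrightarrow> \<exists>w\<in>W. \<exists>p\<in>P. q = padd w p"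
  unfolding tiles_def msum_def by blast

lemma step_x:
  assumes m: "m \<ge> 2" and T: "tiles (Sset m x) UNIV W" and w: "(w1,w2,w3) \<in> W"
  shows "(w1 + (3*m+6), w2, w3) \<in> W"
proof -
  obtain y1 y2 y3 where y: "x 1 = (y1,y2,y3)" by (cases "x 1") auto
  obtain v t where v: "v \<in> W" and t: "t \<in> Sset m x"
    and n: "(w1 + ((3*m+5) + (3*m+6)*y1), w2 + ((1) + (3*m+6)*y2), w3 + ((1) + (3*m+6)*y3)) = padd v t"
    using tiles_COV[OF T] by blast
  obtain v1 v2 v3 where vv: "v = (v1,v2,v3)" by (cases v) auto
  obtain t1 t2 t3 where tt: "t = (t1,t2,t3)" by (cases t) auto
  have ne: "v1 + t1 = w1 + ((3*m+5) + (3*m+6)*y1)" "v2 + t2 = w2 + ((1) + (3*m+6)*y2)" "v3 + t3 = w3 + ((1) + (3*m+6)*y3)"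
    using n vv tt by auto
  have c0: "((3*m+4) + (3*m+6)*y1, (1) + (3*m+6)*y2, (1) + (3*m+6)*y3) \<in> Sset m x" by (rule inS1[where x=x, OF m cornerQ(1)[OF m] y])
  have c1: "((3*m+5) + (3*m+6)*y1, (2) + (3*m+6)*y2, (1) + (3*m+6)*y3) \<in> Sset m x" by (rule inS1[where x=x, OF m cornerQ(3)[OF m] y])
  have c2: "((3*m+5) + (3*m+6)*y1, (0) + (3*m+6)*y2, (1) + (3*m+6)*y3) \<in> Sset m x" by (rule inS1[where x=x, OF m cornerQ(2)[OF m] y])
  have c3: "((3*m+5) + (3*m+6)*y1, (1) + (3*m+6)*y2, (2) + (3*m+6)*y3) \<in> Sset m x" by (rule inS1[where x=x, OF m cornerQ(5)[OF m] y])
  have c4: "((3*m+5) + (3*m+6)*y1, (1) + (3*m+6)*y2, (0) + (3*m+6)*y3) \<in> Sset m x" by (rule inS1[where x=x, OF m cornerQ(4)[OF m] y])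
  have bS: "((-1) + (3*m+6)*y1, (1) + (3*m+6)*y2, (1) + (3*m+6)*y3) \<in> Sset m x" by (rule inS1[where x=x, OF m cornerQ(16)[OF m] y])
  have mm1: "(-1::int) mod (3*m+6) = 3*m+5" using m by (simp add: zmod_minus1)
  have m1: "(1::int) mod (3*m+6) = 1" "(3*m+5::int) mod (3*m+6) = 3*m+5" using m by simp_all
  have notn: "((3*m+5) + (3*m+6)*y1, (1) + (3*m+6)*y2, (1) + (3*m+6)*y3) \<notin> Sset m x"
  proof
    assume a: "((3*m+5) + (3*m+6)*y1, (1) + (3*m+6)*y2, (1) + (3*m+6)*y3) \<in> Sset m x"
    have "pm (3*m+6) ((3*m+5) + (3*m+6)*y1, (1) + (3*m+6)*y2, (1) + (3*m+6)*y3) = pm (3*m+6) ((-1) + (3*m+6)*y1, (1) + (3*m+6)*y2, (1) + (3*m+6)*y3)"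
      using mm1 m1 by (simp add: modsh3 modsh2)
    from S_uniq[OF m a bS this] show False using m by simp
  qed
  have vw: "v \<noteq> (w1,w2,w3)"
  proof
    assume "v = (w1,w2,w3)"
    then have "t = ((3*m+5) + (3*m+6)*y1, (1) + (3*m+6)*y2, (1) + (3*m+6)*y3)" using ne vv tt by simp
    then show False using t notn by simp
  qed
  have n0: "(t1-1,t2,t3) \<notin> Sset m x"
  proof
    assume a: "(t1-1,t2,t3) \<in> Sset m x"
    have "padd v (t1-1,t2,t3) = padd (w1,w2,w3) ((3*m+4) + (3*m+6)*y1, (1) + (3*m+6)*y2, (1) + (3*m+6)*y3)"
      using ne vv by (simp add: algebra_simps)
    from tiles_NO[OF T v w a c0 this] vw show False by simp
  qed
  have n1: "(t1,t2+1,t3) \<notin> Sset m x"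
  proof
    assume a: "(t1,t2+1,t3) \<in> Sset m x"
    have "padd v (t1,t2+1,t3) = padd (w1,w2,w3) ((3*m+5) + (3*m+6)*y1, (2) + (3*m+6)*y2, (1) + (3*m+6)*y3)"
      using ne vv by (simp add: algebra_simps)
    from tiles_NO[OF T v w a c1 this] vw show False by simp
  qed
  have n2: "(t1,t2-1,t3) \<notin> Sset m x"
  proof
    assume a: "(t1,t2-1,t3) \<in> Sset m x"
    have "padd v (t1,t2-1,t3) = padd (w1,w2,w3) ((3*m+5) + (3*m+6)*y1, (0) + (3*m+6)*y2, (1) + (3*m+6)*y3)"
      using ne vv by (simp add: algebra_simps)
    from tiles_NO[OF T v w a c2 this] vw show False by simp
  qed
  have n3: "(t1,t2,t3+1) \<notin> Sset m x"
  proof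
    assume a: "(t1,t2,t3+1) \<in> Sset m x"
    have "padd v (t1,t2,t3+1) = padd (w1,w2,w3) ((3*m+5) + (3*m+6)*y1, (1) + (3*m+6)*y2, (2) + (3*m+6)*y3)"
      using ne vv by (simp add: algebra_simps)
    from tiles_NO[OF T v w a c3 this] vw show False by simp
  qed
  have n4: "(t1,t2,t3-1) \<notin> Sset m x"
  proof
    assume a: "(t1,t2,t3-1) \<in> Sset m x"
    have "padd v (t1,t2,t3-1) = padd (w1,w2,w3) ((3*m+5) + (3*m+6)*y1, (1) + (3*m+6)*y2, (0) + (3*m+6)*y3)"
      using ne vv by (simp add: algebra_simps)
    from tiles_NO[OF T v w a c4 this] vw show False by simp
  qed
  have "(t1,t2,t3) = ((-1) + (3*m+6)*y1, (1) + (3*m+6)*y2, (1) + (3*m+6)*y3)"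
    by (rule key_x[OF m t[unfolded tt] n0 n1 n2 n3 n4 y])
  then have e: "t1 = (-1) + (3*m+6)*y1" "t2 = (1) + (3*m+6)*y2" "t3 = (1) + (3*m+6)*y3" by simp_all
  have "v1 = w1 + (3*m+6)" "v2 = w2" "v3 = w3" using ne e by linarith+
  then show ?thesis using v vv by simp
qed

lemma step_y:
  assumes m: "m \<ge> 2" and T: "tiles (Sset m x) UNIV W" and w: "(w1,w2,w3) \<in> W"
  shows "(w1, w2 + (3*m+6), w3) \<in> W"
proof -
  obtain y1 y2 y3 where y: "x 1 = (y1,y2,y3)" by (cases "x 1") auto
  obtain v t where v: "v \<in> W" and t: "t \<in> Sset m x"
    and n: "(w1 + ((1) + (3*m+6)*y1), w2 + ((3*m+5) + (3*m+6)*y2), w3 + ((1) + (3*m+6)*y3)) = padd v t"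
    using tiles_COV[OF T] by blast
  obtain v1 v2 v3 where vv: "v = (v1,v2,v3)" by (cases v) auto
  obtain t1 t2 t3 where tt: "t = (t1,t2,t3)" by (cases t) auto
  have ne: "v1 + t1 = w1 + ((1) + (3*m+6)*y1)" "v2 + t2 = w2 + ((3*m+5) + (3*m+6)*y2)" "v3 + t3 = w3 + ((1) + (3*m+6)*y3)"
    using n vv tt by auto
  have c0: "((1) + (3*m+6)*y1, (3*m+4) + (3*m+6)*y2, (1) + (3*m+6)*y3) \<in> Sset m x" by (rule inS1[where x=x, OF m cornerQ(6)[OF m] y])
  have c1: "((2) + (3*m+6)*y1, (3*m+5) + (3*m+6)*y2, (1) + (3*m+6)*y3) \<in> Sset m x" by (rule inS1[where x=x, OF m cornerQ(8)[OF m] y])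
  have c2: "((0) + (3*m+6)*y1, (3*m+5) + (3*m+6)*y2, (1) + (3*m+6)*y3) \<in> Sset m x" by (rule inS1[where x=x, OF m cornerQ(7)[OF m] y])
  have c3: "((1) + (3*m+6)*y1, (3*m+5) + (3*m+6)*y2, (2) + (3*m+6)*y3) \<in> Sset m x" by (rule inS1[where x=x, OF m cornerQ(10)[OF m] y])
  have c4: "((1) + (3*m+6)*y1, (3*m+5) + (3*m+6)*y2, (0) + (3*m+6)*y3) \<in> Sset m x" by (rule inS1[where x=x, OF m cornerQ(9)[OF m] y])
  have bS: "((1) + (3*m+6)*y1, (-1) + (3*m+6)*y2, (1) + (3*m+6)*y3) \<in> Sset m x" by (rule inS1[where x=x, OF m cornerQ(17)[OF m] y])
  have mm1: "(-1::int) mod (3*m+6) = 3*m+5" using m by (simp add: zmod_minus1)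
  have m1: "(1::int) mod (3*m+6) = 1" "(3*m+5::int) mod (3*m+6) = 3*m+5" using m by simp_all
  have notn: "((1) + (3*m+6)*y1, (3*m+5) + (3*m+6)*y2, (1) + (3*m+6)*y3) \<notin> Sset m x"
  proof
    assume a: "((1) + (3*m+6)*y1, (3*m+5) + (3*m+6)*y2, (1) + (3*m+6)*y3) \<in> Sset m x"
    have "pm (3*m+6) ((1) + (3*m+6)*y1, (3*m+5) + (3*m+6)*y2, (1) + (3*m+6)*y3) = pm (3*m+6) ((1) + (3*m+6)*y1, (-1) + (3*m+6)*y2, (1) + (3*m+6)*y3)"
      using mm1 m1 by (simp add: modsh3 modsh2)
    from S_uniq[OF m a bS this] show False using m by simp
  qed
  have vw: "v \<noteq> (w1,w2,w3)"
  proof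
    assume "v = (w1,w2,w3)"
    then have "t = ((1) + (3*m+6)*y1, (3*m+5) + (3*m+6)*y2, (1) + (3*m+6)*y3)" using ne vv tt by simp
    then show False using t notn by simp
  qed
  have n0: "(t1,t2-1,t3) \<notin> Sset m x"
  proof
    assume a: "(t1,t2-1,t3) \<in> Sset m x"
    have "padd v (t1,t2-1,t3) = padd (w1,w2,w3) ((1) + (3*m+6)*y1, (3*m+4) + (3*m+6)*y2, (1) + (3*m+6)*y3)"
      using ne vv by (simp add: algebra_simps)
    from tiles_NO[OF T v w a c0 this] vw show False by simp
  qed
  have n1: "(t1+1,t2,t3) \<notin> Sset m x"
  proof
    assume a: "(t1+1,t2,t3) \<in> Sset m x"
    have "padd v (t1+1,t2,t3) = padd (w1,w2,w3) ((2) + (3*m+6)*y1, (3*m+5) + (3*m+6)*y2, (1) + (3*m+6)*y3)"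
      using ne vv by (simp add: algebra_simps)
    from tiles_NO[OF T v w a c1 this] vw show False by simp
  qed
  have n2: "(t1-1,t2,t3) \<notin> Sset m x"
  proof
    assume a: "(t1-1,t2,t3) \<in> Sset m x"
    have "padd v (t1-1,t2,t3) = padd (w1,w2,w3) ((0) + (3*m+6)*y1, (3*m+5) + (3*m+6)*y2, (1) + (3*m+6)*y3)"
      using ne vv by (simp add: algebra_simps)
    from tiles_NO[OF T v w a c2 this] vw show False by simp
  qed
  have n3: "(t1,t2,t3+1) \<notin> Sset m x"
  proof
    assume a: "(t1,t2,t3+1) \<in> Sset m x"
    have "padd v (t1,t2,t3+1) = padd (w1,w2,w3) ((1) + (3*m+6)*y1, (3*m+5) + (3*m+6)*y2, (2) + (3*m+6)*y3)"
      using ne vv by (simp add: algebra_simps)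
    from tiles_NO[OF T v w a c3 this] vw show False by simp
  qed
  have n4: "(t1,t2,t3-1) \<notin> Sset m x"
  proof
    assume a: "(t1,t2,t3-1) \<in> Sset m x"
    have "padd v (t1,t2,t3-1) = padd (w1,w2,w3) ((1) + (3*m+6)*y1, (3*m+5) + (3*m+6)*y2, (0) + (3*m+6)*y3)"
      using ne vv by (simp add: algebra_simps)
    from tiles_NO[OF T v w a c4 this] vw show False by simp
  qed
  have "(t1,t2,t3) = ((1) + (3*m+6)*y1, (-1) + (3*m+6)*y2, (1) + (3*m+6)*y3)"
    by (rule key_y[OF m t[unfolded tt] n0 n1 n2 n3 n4 y])
  then have e: "t1 = (1) + (3*m+6)*y1" "t2 = (-1) + (3*m+6)*y2" "t3 = (1) + (3*m+6)*y3" by simp_all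
  have "v1 = w1" "v2 = w2 + (3*m+6)" "v3 = w3" using ne e by linarith+
  then show ?thesis using v vv by simp
qed

lemma step_z:
  assumes m: "m \<ge> 2" and T: "tiles (Sset m x) UNIV W" and w: "(w1,w2,w3) \<in> W"
  shows "(w1, w2, w3 + (3*m+6)) \<in> W"
proof -
  obtain y1 y2 y3 where y: "x 1 = (y1,y2,y3)" by (cases "x 1") auto
  obtain v t where v: "v \<in> W" and t: "t \<in> Sset m x"
    and n: "(w1 + ((1) + (3*m+6)*y1), w2 + ((1) + (3*m+6)*y2), w3 + ((3*m+5) + (3*m+6)*y3)) = padd v t"
    using tiles_COV[OF T] by blast
  obtain v1 v2 v3 where vv: "v = (v1,v2,v3)" by (cases v) auto
  obtain t1 t2 t3 where tt: "t = (t1,t2,t3)" by (cases t) auto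
  have ne: "v1 + t1 = w1 + ((1) + (3*m+6)*y1)" "v2 + t2 = w2 + ((1) + (3*m+6)*y2)" "v3 + t3 = w3 + ((3*m+5) + (3*m+6)*y3)"
    using n vv tt by auto
  have c0: "((1) + (3*m+6)*y1, (1) + (3*m+6)*y2, (3*m+4) + (3*m+6)*y3) \<in> Sset m x" by (rule inS1[where x=x, OF m cornerQ(11)[OF m] y])
  have c1: "((2) + (3*m+6)*y1, (1) + (3*m+6)*y2, (3*m+5) + (3*m+6)*y3) \<in> Sset m x" by (rule inS1[where x=x, OF m cornerQ(13)[OF m] y])
  have c2: "((0) + (3*m+6)*y1, (1) + (3*m+6)*y2, (3*m+5) + (3*m+6)*y3) \<in> Sset m x" by (rule inS1[where x=x, OF m cornerQ(12)[OF m] y])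
  have c3: "((1) + (3*m+6)*y1, (2) + (3*m+6)*y2, (3*m+5) + (3*m+6)*y3) \<in> Sset m x" by (rule inS1[where x=x, OF m cornerQ(15)[OF m] y])
  have c4: "((1) + (3*m+6)*y1, (0) + (3*m+6)*y2, (3*m+5) + (3*m+6)*y3) \<in> Sset m x" by (rule inS1[where x=x, OF m cornerQ(14)[OF m] y])
  have bS: "((1) + (3*m+6)*y1, (1) + (3*m+6)*y2, (-1) + (3*m+6)*y3) \<in> Sset m x" by (rule inS1[where x=x, OF m cornerQ(18)[OF m] y])
  have mm1: "(-1::int) mod (3*m+6) = 3*m+5" using m by (simp add: zmod_minus1)
  have m1: "(1::int) mod (3*m+6) = 1" "(3*m+5::int) mod (3*m+6) = 3*m+5" using m by simp_all
  have notn: "((1) + (3*m+6)*y1, (1) + (3*m+6)*y2, (3*m+5) + (3*m+6)*y3) \<notin> Sset m x"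
  proof
    assume a: "((1) + (3*m+6)*y1, (1) + (3*m+6)*y2, (3*m+5) + (3*m+6)*y3) \<in> Sset m x"
    have "pm (3*m+6) ((1) + (3*m+6)*y1, (1) + (3*m+6)*y2, (3*m+5) + (3*m+6)*y3) = pm (3*m+6) ((1) + (3*m+6)*y1, (1) + (3*m+6)*y2, (-1) + (3*m+6)*y3)"
      using mm1 m1 by (simp add: modsh3 modsh2)
    from S_uniq[OF m a bS this] show False using m by simp
  qed
  have vw: "v \<noteq> (w1,w2,w3)"
  proof
    assume "v = (w1,w2,w3)"
    then have "t = ((1) + (3*m+6)*y1, (1) + (3*m+6)*y2, (3*m+5) + (3*m+6)*y3)" using ne vv tt by simp
    then show False using t notn by simp
  qed
  have n0: "(t1,t2,t3-1) \<notin> Sset m x"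
  proof
    assume a: "(t1,t2,t3-1) \<in> Sset m x"
    have "padd v (t1,t2,t3-1) = padd (w1,w2,w3) ((1) + (3*m+6)*y1, (1) + (3*m+6)*y2, (3*m+4) + (3*m+6)*y3)"
      using ne vv by (simp add: algebra_simps)
    from tiles_NO[OF T v w a c0 this] vw show False by simp
  qed
  have n1: "(t1+1,t2,t3) \<notin> Sset m x"
  proof
    assume a: "(t1+1,t2,t3) \<in> Sset m x"
    have "padd v (t1+1,t2,t3) = padd (w1,w2,w3) ((2) + (3*m+6)*y1, (1) + (3*m+6)*y2, (3*m+5) + (3*m+6)*y3)"
      using ne vv by (simp add: algebra_simps)
    from tiles_NO[OF T v w a c1 this] vw show False by simp
  qed
  have n2: "(t1-1,t2,t3) \<notin> Sset m x"
  proof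
    assume a: "(t1-1,t2,t3) \<in> Sset m x"
    have "padd v (t1-1,t2,t3) = padd (w1,w2,w3) ((0) + (3*m+6)*y1, (1) + (3*m+6)*y2, (3*m+5) + (3*m+6)*y3)"
      using ne vv by (simp add: algebra_simps)
    from tiles_NO[OF T v w a c2 this] vw show False by simp
  qed
  have n3: "(t1,t2+1,t3) \<notin> Sset m x"
  proof
    assume a: "(t1,t2+1,t3) \<in> Sset m x"
    have "padd v (t1,t2+1,t3) = padd (w1,w2,w3) ((1) + (3*m+6)*y1, (2) + (3*m+6)*y2, (3*m+5) + (3*m+6)*y3)"
      using ne vv by (simp add: algebra_simps)
    from tiles_NO[OF T v w a c3 this] vw show False by simp
  qed
  have n4: "(t1,t2-1,t3) \<notin> Sset m x"
  proof
    assume a: "(t1,t2-1,t3) \<in> Sset m x"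
    have "padd v (t1,t2-1,t3) = padd (w1,w2,w3) ((1) + (3*m+6)*y1, (0) + (3*m+6)*y2, (3*m+5) + (3*m+6)*y3)"
      using ne vv by (simp add: algebra_simps)
    from tiles_NO[OF T v w a c4 this] vw show False by simp
  qed
  have "(t1,t2,t3) = ((1) + (3*m+6)*y1, (1) + (3*m+6)*y2, (-1) + (3*m+6)*y3)"
    by (rule key_z[OF m t[unfolded tt] n0 n1 n2 n3 n4 y])
  then have e: "t1 = (1) + (3*m+6)*y1" "t2 = (1) + (3*m+6)*y2" "t3 = (-1) + (3*m+6)*y3" by simp_all
  have "v1 = w1" "v2 = w2" "v3 = w3 + (3*m+6)" using ne e by linarith+
  then show ?thesis using v vv by simp
qed

lemma step_nat:
  assumes m: "m \<ge> 2" and T: "tiles (Sset m x) UNIV W" and w: "(w1,w2,w3) \<in> W"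
  shows "(w1 + (3*m+6)*int a, w2 + (3*m+6)*int b, w3 + (3*m+6)*int c) \<in> W"
proof -
  have A: "(w1 + (3*m+6)*int a, w2, w3) \<in> W" for a
  proof (induction a)
    case 0 then show ?case using w by simp
  next
    case (Suc a) from step_x[OF m T Suc] show ?case by (simp add: algebra_simps)
  qed
  have B: "(w1 + (3*m+6)*int a, w2 + (3*m+6)*int b, w3) \<in> W" for a b
  proof (induction b)
    case 0 then show ?case using A by simp
  next
    case (Suc b) from step_y[OF m T Suc] show ?case by (simp add: algebra_simps)
  qed
  show ?thesis
  proof (induction c)
    case 0 then show ?case using B by simp
  next
    case (Suc c) from step_z[OF m T Suc] show ?case by (simp add: algebra_simps)
  qed
qed

lemma step_int:
  assumes m: "m \<ge> 2" and T: "tiles (Sset m x) UNIV W" and w: "(w1,w2,w3) \<in> W"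
    and k: "k1 \<ge> 0" "k2 \<ge> 0" "k3 \<ge> 0"
  shows "(w1 + (3*m+6)*k1, w2 + (3*m+6)*k2, w3 + (3*m+6)*k3) \<in> W"
  using step_nat[OF m T w, of "nat k1" "nat k2" "nat k3"] k by simp

lemma mem_dil: "(a,b,c) \<in> dil N UNIV \<longleftrightarrow> N dvd a \<and> N dvd b \<and> N dvd c"
proof
  assume "(a,b,c) \<in> dil N UNIV"
  then obtain u where "(a,b,c) = psmul N u" by (auto simp: dil_def)
  then show "N dvd a \<and> N dvd b \<and> N dvd c" by (cases u) auto
next
  assume "N dvd a \<and> N dvd b \<and> N dvd c"
  then obtain u1 u2 u3 where "a = N*u1" "b = N*u2" "c = N*u3" by (auto elim!: dvdE)
  then have "(a,b,c) = psmul N (u1,u2,u3)" by simp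
  then show "(a,b,c) \<in> dil N UNIV" unfolding dil_def by (metis rangeI)
qed

lemma lattice_tile:
  assumes m: "m \<ge> 2"
  shows "tiles (Sset m x) UNIV (dil (3*m+6) UNIV)"
  unfolding tiles_def
proof (rule conjI, intro ballI impI)
  fix w1 w2 p1 p2 assume w: "w1 \<in> dil (3*m+6) UNIV" "w2 \<in> dil (3*m+6) UNIV"
    and p: "p1 \<in> Sset m x" "p2 \<in> Sset m x" and e: "padd w1 p1 = padd w2 p2"
  obtain a1 a2 a3 where wa: "w1 = (a1,a2,a3)" by (cases w1) auto
  obtain b1 b2 b3 where wb: "w2 = (b1,b2,b3)" by (cases w2) auto
  obtain c1 c2 c3 where pc: "p1 = (c1,c2,c3)" by (cases p1) auto
  obtain d1 d2 d3 where pd: "p2 = (d1,d2,d3)" by (cases p2) auto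
  have dv: "(3*m+6) dvd a1" "(3*m+6) dvd a2" "(3*m+6) dvd a3" "(3*m+6) dvd b1" "(3*m+6) dvd b2" "(3*m+6) dvd b3"
    using w wa wb mem_dil by auto
  have ee: "a1 + c1 = b1 + d1" "a2 + c2 = b2 + d2" "a3 + c3 = b3 + d3" using e wa wb pc pd by auto
  have "c1 mod (3*m+6) = d1 mod (3*m+6)" using dv(1,4) ee(1)
    by (metis add.commute mod_add_left_eq dvd_imp_mod_0 add_0)
  moreover have "c2 mod (3*m+6) = d2 mod (3*m+6)" using dv(2,5) ee(2)
    by (metis add.commute mod_add_left_eq dvd_imp_mod_0 add_0)
  moreover have "c3 mod (3*m+6) = d3 mod (3*m+6)" using dv(3,6) ee(3)
    by (metis add.commute mod_add_left_eq dvd_imp_mod_0 add_0)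
  ultimately have "p1 = p2" using S_uniq[OF m p] pc pd by simp
  then show "w1 = w2 \<and> p1 = p2" using e wa wb pc pd by simp
next
  show "msum (dil (3*m+6) UNIV) (Sset m x) = UNIV"
  proof -
    have "q \<in> msum (dil (3*m+6) UNIV) (Sset m x)" for q :: pt
    proof -
    obtain q1 q2 q3 where q: "q = (q1,q2,q3)" by (cases q) auto
    obtain s where s: "s \<in> Sset m x" "pm (3*m+6) s = pm (3*m+6) q" using S_exist[OF m] by blast
    obtain s1 s2 s3 where ss: "s = (s1,s2,s3)" by (cases s) auto
    have "(3*m+6) dvd (q1 - s1)" "(3*m+6) dvd (q2 - s2)" "(3*m+6) dvd (q3 - s3)"
      using s(2) ss q by (auto simp: mod_eq_dvd_iff dvd_diff_commute)
    then have "(q1 - s1, q2 - s2, q3 - s3) \<in> dil (3*m+6) UNIV" by (simp add: mem_dil)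
    moreover have "q = padd (q1 - s1, q2 - s2, q3 - s3) s" using q ss by simp
    ultimately show ?thesis using s(1) unfolding msum_def by blast
    qed
    then show ?thesis by blast
  qed
qed

lemma rigid:
  assumes m: "m \<ge> 2" and T: "tiles (Sset m x) UNIV W"
  shows "\<exists>t. W = transl (dil (3*m+6) UNIV) t"
proof -
  obtain w0 where w0: "w0 \<in> W" using tiles_COV[OF T] by blast
  obtain a1 a2 a3 where a: "w0 = (a1,a2,a3)" by (cases w0) auto
  obtain y1 y2 y3 where y: "x 1 = (y1,y2,y3)" by (cases "x 1") auto
  obtain b1 b2 b3 where bS: "(b1,b2,b3) \<in> Sset m x"
    using inS1[where x=x, OF m cornerQ(16)[OF m] y] by blast
  have aW: "(a1,a2,a3) \<in> W" using w0 a by simp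
  have C1: "(3*m+6) dvd (c1 - a1) \<and> (3*m+6) dvd (c2 - a2) \<and> (3*m+6) dvd (c3 - a3)" if c: "(c1,c2,c3) \<in> W" for c1 c2 c3
  proof -
    obtain s where s: "s \<in> Sset m x" "pm (3*m+6) s = pm (3*m+6) (c1 + b1 - a1, c2 + b2 - a2, c3 + b3 - a3)"
      using S_exist[OF m] by blast
    obtain s1 s2 s3 where ss: "s = (s1,s2,s3)" by (cases s) auto
    have "(3*m+6) dvd (c1 + b1 - a1 - s1)" "(3*m+6) dvd (c2 + b2 - a2 - s2)" "(3*m+6) dvd (c3 + b3 - a3 - s3)"
      using s(2) ss by (auto simp: mod_eq_dvd_iff dvd_diff_commute)
    then obtain u1 u2 u3 where u: "c1 + b1 - a1 - s1 = (3*m+6)*u1" "c2 + b2 - a2 - s2 = (3*m+6)*u2" "c3 + b3 - a3 - s3 = (3*m+6)*u3"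
      by (auto elim!: dvdE)
    have W1: "(a1 + (3*m+6)*(u1 + \<bar>u1\<bar>), a2 + (3*m+6)*(u2 + \<bar>u2\<bar>), a3 + (3*m+6)*(u3 + \<bar>u3\<bar>)) \<in> W"
      by (rule step_int[OF m T aW]) auto
    have W2: "(c1 + (3*m+6)*\<bar>u1\<bar>, c2 + (3*m+6)*\<bar>u2\<bar>, c3 + (3*m+6)*\<bar>u3\<bar>) \<in> W"
      by (rule step_int[OF m T c]) auto
    have "padd (a1 + (3*m+6)*(u1 + \<bar>u1\<bar>), a2 + (3*m+6)*(u2 + \<bar>u2\<bar>), a3 + (3*m+6)*(u3 + \<bar>u3\<bar>)) (s1,s2,s3)
        = padd (c1 + (3*m+6)*\<bar>u1\<bar>, c2 + (3*m+6)*\<bar>u2\<bar>, c3 + (3*m+6)*\<bar>u3\<bar>) (b1,b2,b3)"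
      using u by (simp add: algebra_simps)
    from tiles_NO[OF T W1 W2 s(1)[unfolded ss] bS this]
    have "a1 + (3*m+6)*(u1 + \<bar>u1\<bar>) = c1 + (3*m+6)*\<bar>u1\<bar>" "a2 + (3*m+6)*(u2 + \<bar>u2\<bar>) = c2 + (3*m+6)*\<bar>u2\<bar>"
      "a3 + (3*m+6)*(u3 + \<bar>u3\<bar>) = c3 + (3*m+6)*\<bar>u3\<bar>" by simp_all
    then have "c1 - a1 = (3*m+6)*u1" "c2 - a2 = (3*m+6)*u2" "c3 - a3 = (3*m+6)*u3" by (simp_all add: algebra_simps)
    then show ?thesis by simp
  qed
  have C2: "(c1,c2,c3) \<in> W" if d: "(3*m+6) dvd (c1 - a1)" "(3*m+6) dvd (c2 - a2)" "(3*m+6) dvd (c3 - a3)" for c1 c2 c3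
  proof -
    obtain w s where w: "w \<in> W" and s: "s \<in> Sset m x" and e: "(c1 + b1, c2 + b2, c3 + b3) = padd w s"
      using tiles_COV[OF T] by blast
    obtain e1 e2 e3 where we: "w = (e1,e2,e3)" by (cases w) auto
    obtain s1 s2 s3 where ss: "s = (s1,s2,s3)" by (cases s) auto
    have de: "(3*m+6) dvd (e1 - a1)" "(3*m+6) dvd (e2 - a2)" "(3*m+6) dvd (e3 - a3)" using C1 w we by auto
    have eq: "s1 = c1 + b1 - e1" "s2 = c2 + b2 - e2" "s3 = c3 + b3 - e3" using e we ss by auto
    have "s1 - b1 = (c1 - a1) - (e1 - a1)" "s2 - b2 = (c2 - a2) - (e2 - a2)" "s3 - b3 = (c3 - a3) - (e3 - a3)"
      using eq by simp_all
    then have "(3*m+6) dvd (s1 - b1)" "(3*m+6) dvd (s2 - b2)" "(3*m+6) dvd (s3 - b3)"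
      using d de by (metis dvd_diff)+
    then have "pm (3*m+6) (s1,s2,s3) = pm (3*m+6) (b1,b2,b3)" by (simp add: mod_eq_dvd_iff)
    from S_uniq[OF m s[unfolded ss] bS this] have "s1 = b1" "s2 = b2" "s3 = b3" by simp_all
    then have "w = (c1,c2,c3)" using eq we by simp
    then show ?thesis using w by simp
  qed
  have "W = transl (dil (3*m+6) UNIV) (a1,a2,a3)"
  proof (rule set_eqI)
    fix p :: pt
    obtain p1 p2 p3 where p: "p = (p1,p2,p3)" by (cases p) auto
    show "p \<in> W \<longleftrightarrow> p \<in> transl (dil (3*m+6) UNIV) (a1,a2,a3)"
      unfolding p mem_transl mem_dil using C1[of p1 p2 p3] C2[of p1 p2 p3] by blast
  qed
  then show ?thesis by blast
qed


theorem lemma2p4: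
  fixes l m :: int and x :: "int \<Rightarrow> pt"
  assumes "l \<ge> 2"
    and "m = l^3 - (l-2)^3"
    and "bij_betw x {1..m} (cube l - transl (cube (l-2)) (1,1,1))"
  shows "tiles (Sset m x) UNIV (dil (3*m+6) UNIV)
       \<and> (\<forall>W. tiles (Sset m x) UNIV W \<longrightarrow> (\<exists>t. W = transl (dil (3*m+6) UNIV) t))"
proof -
  have "m = 6*(l-1)^2 + 2" unfolding assms(2) by (simp add: power2_eq_square power3_eq_cube algebra_simps)
  then have m: "m \<ge> 2" by (smt (verit) zero_le_power2)
  show ?thesis using lattice_tile[OF m] rigid[OF m] by blast
qed

end
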